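(* Let $\mathcal{X}$ and $\mathcal{W}$ be finite sets and $G\in\mathbb{R}^{|\mathcal{W}|\times|\mathcal{X}|}$ a matrix such that for every probability vector $q$ on $\mathcal{X}$, $\|Gq\|_1>0$ and $Gq/\|Gq\|_1$ is entrywise non-negative. Let $(\eta,F)$ be a generalised entropy. For jointly distributed random variables $X$ (values in $\mathcal{X}$, distribution $p$) and $Y$ (discrete), define $H_g(X)=\eta\big(\|Gp\|_1F(Gp/\|Gp\|_1)\big)$ and $H_g(X\mid Y)=\eta\Big(\sum_{y:\,p(y)>0}p(y)\|Gp_{X\mid y}\|_1F\big(Gp_{X\mid y}/\|Gp_{X\mid y}\|_1\big)\Big)$. Then $H_g(X)-H_g(X\mid Y)\geq 0$.
   Context: Generalised entropy: a pair $(\eta,F)$ where $F$ is a bounded real-valued function on probability vectors of every finite length that is symmetric (unchanged by permuting entries) and expansible (unchanged by appending zero entries), and $\eta$ is a real function, such that either $\eta$ is increasing and $F$ concave, or $\eta$ is decreasing and $F$ convex. $p_{X\mid y}=(p(x\mid y))_{x\in\mathcal{X}}$ is the posterior vector and $\|\cdot\|_1$ the $\ell_1$ norm. *)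

theory Defs
  imports "HOL-Probability.Probability"
begin

definition prob_vec :: "real list \<Rightarrow> bool" where
  "prob_vec xs \<longleftrightarrow> (\<forall>a\<in>set xs. 0 \<le> a) \<and> sum_list xs = 1"

definition concave_F :: "(real list \<Rightarrow> real) \<Rightarrow> bool" where
  "concave_F F \<longleftrightarrow> (\<forall>xs ys t. prob_vec xs \<longrightarrow> prob_vec ys \<longrightarrow> length xs = length ys
     \<longrightarrow> 0 \<le> t \<longrightarrow> t \<le> 1 \<longrightarrow>
     t * F xs + (1 - t) * F ys \<le> F (map2 (\<lambda>a b. t * a + (1 - t) * b) xs ys))"

definition convex_F :: "(real list \<Rightarrow> real) \<Rightarrow> bool" where
  "convex_F F \<longleftrightarrow> (\<forall>xs ys t. prob_vec xs \<longrightarrow> prob_vec ys \<longrightarrow> length xs = length ys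
     \<longrightarrow> 0 \<le> t \<longrightarrow> t \<le> 1 \<longrightarrow>
     F (map2 (\<lambda>a b. t * a + (1 - t) * b) xs ys) \<le> t * F xs + (1 - t) * F ys)"

definition generalised_entropy :: "(real \<Rightarrow> real) \<Rightarrow> (real list \<Rightarrow> real) \<Rightarrow> bool" where
  "generalised_entropy \<eta> F \<longleftrightarrow>
     (\<exists>B. \<forall>xs. prob_vec xs \<longrightarrow> \<bar>F xs\<bar> \<le> B) \<and>
     (\<forall>xs ys. prob_vec xs \<longrightarrow> mset ys = mset xs \<longrightarrow> F ys = F xs) \<and>
     (\<forall>xs. prob_vec xs \<longrightarrow> F (xs @ [0]) = F xs) \<and>
     ((mono \<eta> \<and> concave_F F) \<or> (antimono \<eta> \<and> convex_F F))"

text \<open>A vector indexed by a finite type, listed in some fixed order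
  (the choice is irrelevant since F is symmetric).\<close>
definition to_list :: "('w::finite \<Rightarrow> real) \<Rightarrow> real list" where
  "to_list v = map v (SOME ws. distinct ws \<and> set ws = (UNIV :: 'w set))"

definition matvec :: "('w::finite \<Rightarrow> 'x::finite \<Rightarrow> real) \<Rightarrow> ('x \<Rightarrow> real) \<Rightarrow> 'w \<Rightarrow> real" where
  "matvec G q = (\<lambda>w. \<Sum>x\<in>UNIV. G w x * q x)"

definition norm1 :: "('w::finite \<Rightarrow> real) \<Rightarrow> real" where
  "norm1 v = (\<Sum>w\<in>UNIV. \<bar>v w\<bar>)"

definition persp :: "(real list \<Rightarrow> real) \<Rightarrow> ('w::finite \<Rightarrow> real) \<Rightarrow> real" where
  "persp F v = norm1 v * F (to_list (\<lambda>w. v w / norm1 v))"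

definition Hg :: "(real \<Rightarrow> real) \<Rightarrow> (real list \<Rightarrow> real) \<Rightarrow> ('w::finite \<Rightarrow> 'x::finite \<Rightarrow> real)
    \<Rightarrow> ('x \<times> 'y) pmf \<Rightarrow> real" where
  "Hg \<eta> F G P = \<eta> (persp F (matvec G (pmf (map_pmf fst P))))"

definition Hg_cond :: "(real \<Rightarrow> real) \<Rightarrow> (real list \<Rightarrow> real) \<Rightarrow> ('w::finite \<Rightarrow> 'x::finite \<Rightarrow> real)
    \<Rightarrow> ('x \<times> 'y) pmf \<Rightarrow> real" where
  "Hg_cond \<eta> F G P = \<eta> (\<Sum>\<^sub>\<infinity>y\<in>{y. 0 < pmf (map_pmf snd P) y}.
      pmf (map_pmf snd P) y *
      persp F (matvec G (\<lambda>x. pmf P (x, y) / pmf (map_pmf snd P) y)))"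

end

theory Submission imports Defs begin

definition simpl :: "('w::finite \<Rightarrow> real) \<Rightarrow> bool" where
  "simpl a \<longleftrightarrow> (\<forall>k. 0 \<le> a k) \<and> sum a UNIV = 1"

lemma fin_jensen:
  fixes f :: "('w::finite \<Rightarrow> real) \<Rightarrow> real"
  assumes conc: "\<And>a b t. simpl a \<Longrightarrow> simpl b \<Longrightarrow> 0\<le>t \<Longrightarrow> t\<le>1 \<Longrightarrow>
                   t*f a + (1-t)*f b \<le> f (\<lambda>k. t*a k + (1-t)*b k)"
  assumes "finite J" "\<forall>i\<in>J. 0 \<le> w i \<and> simpl (v i)" "sum w J \<le> 1" "simpl t"
  shows "(\<Sum>i\<in>J. w i * f (v i)) + (1 - sum w J) * f t
         \<le> f (\<lambda>k. (\<Sum>i\<in>J. w i * v i k) + (1 - sum w J) * t k)"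
  using assms(2-)
proof (induction J arbitrary: t rule: finite_induct)
  case empty
  then show ?case by simp
next
  case (insert a J)
  define W where "W = sum w J"
  have wa: "0 \<le> w a" and va: "simpl (v a)" using insert by auto
  have W1: "W + w a \<le> 1" using insert W_def by simp
  have WJ: "sum w J \<le> 1" using W1 wa W_def by simp
  have hJ: "\<forall>i\<in>J. 0 \<le> w i \<and> simpl (v i)" using insert by auto
  show ?case
  proof (cases "1 - W = 0")
    case True
    then have "w a = 0" using W1 wa by simp
    then show ?thesis using insert.IH[OF hJ WJ insert.prems(3)] insert.hyps True W_def by simp
  next
    case False
    define c where "c = 1 - W"
    have cpos: "c > 0" using False W1 wa c_def by simp
    define t' where "t' = (\<lambda>k. (w a * v a k + (1 - W - w a) * t k) / c)"
    have st': "simpl t'"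
    proof -
      have "0 \<le> t' k" for k using va insert.prems(3) wa W1 cpos unfolding simpl_def t'_def
        by (intro divide_nonneg_pos add_nonneg_nonneg mult_nonneg_nonneg) auto
      moreover have "sum t' UNIV = 1"
      proof -
        have "sum t' UNIV = (w a * sum (v a) UNIV + (1 - W - w a) * sum t UNIV) / c"
          unfolding t'_def by (simp add: sum_divide_distrib[symmetric] sum.distrib sum_distrib_left)
        also have "\<dots> = 1" using va insert.prems(3) cpos c_def unfolding simpl_def by simp
        finally show ?thesis .
      qed
      ultimately show ?thesis unfolding simpl_def by auto
    qed
    have th: "w a / c * f (v a) + (1 - w a / c) * f t \<le> f (\<lambda>k. w a / c * v a k + (1 - w a / c) * t k)"
    proof (rule conc[OF va insert.prems(3)])
      show "0 \<le> w a / c" using wa cpos by simp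
      show "w a / c \<le> 1" using wa cpos W1 c_def by simp
    qed
    have eq1: "(\<lambda>k. w a / c * v a k + (1 - w a / c) * t k) = t'"
    proof
      fix k show "w a / c * v a k + (1 - w a / c) * t k = t' k"
      proof -
        have "1 - w a / c = (1 - W - w a) / c" using cpos c_def by (simp add: field_simps)
        then show ?thesis unfolding t'_def by (simp add: add_divide_distrib)
      qed
    qed
    have th2: "w a * f (v a) + (1 - W - w a) * f t \<le> c * f t'"
    proof -
      have "c * (w a / c * f (v a) + (1 - w a / c) * f t) \<le> c * f t'"
        using th eq1 cpos by (intro mult_left_mono) auto
      moreover have "c * (w a / c * f (v a) + (1 - w a / c) * f t) = w a * f (v a) + (c - w a) * f t"
        using cpos by (simp add: field_simps)
      ultimately show ?thesis unfolding c_def by simp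
    qed
    have IH: "(\<Sum>i\<in>J. w i * f (v i)) + c * f t' \<le> f (\<lambda>k. (\<Sum>i\<in>J. w i * v i k) + c * t' k)"
      using insert.IH[OF hJ WJ st'] c_def W_def by simp
    have eq2: "(\<lambda>k. (\<Sum>i\<in>J. w i * v i k) + c * t' k) =
       (\<lambda>k. (\<Sum>i\<in>insert a J. w i * v i k) + (1 - sum w (insert a J)) * t k)"
      using cpos insert.hyps W_def unfolding t'_def by (auto simp: field_simps)
    have "(\<Sum>i\<in>insert a J. w i * f (v i)) + (1 - sum w (insert a J)) * f t
       = (\<Sum>i\<in>J. w i * f (v i)) + (w a * f (v a) + (1 - W - w a) * f t)"
      using insert.hyps W_def by (simp add: algebra_simps)
    then show ?thesis using IH th2 eq2 by simp
  qed
qed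

lemma has_sum_fsum:
  fixes g :: "'k \<Rightarrow> 'i \<Rightarrow> real"
  assumes "finite K" "\<And>k. k\<in>K \<Longrightarrow> ((\<lambda>i. g k i) has_sum s k) I"
  shows "((\<lambda>i. \<Sum>k\<in>K. g k i) has_sum (\<Sum>k\<in>K. s k)) I"
  using assms
proof (induction K rule: finite_induct)
  case empty
  then show ?case by simp
next
  case (insert a K)
  have "((\<lambda>i. g a i + (\<Sum>k\<in>K. g k i)) has_sum (s a + (\<Sum>k\<in>K. s k))) I"
    by (rule has_sum_add) (use insert in auto)
  then show ?case using insert.hyps by simp
qed

lemma inf_jensen:
  fixes f :: "('w::finite \<Rightarrow> real) \<Rightarrow> real"
  assumes conc: "\<And>a b t. simpl a \<Longrightarrow> simpl b \<Longrightarrow> 0\<le>t \<Longrightarrow> t\<le>1 \<Longrightarrow>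
                   t*f a + (1-t)*f b \<le> f (\<lambda>k. t*a k + (1-t)*b k)"
  and bound: "\<And>a. simpl a \<Longrightarrow> \<bar>f a\<bar> \<le> B"
  and wpos: "\<And>i. i\<in>I \<Longrightarrow> 0 \<le> w i" and wsum: "(w has_sum 1) I"
  and vs: "\<And>i. i\<in>I \<Longrightarrow> simpl (v i)"
  and m: "\<And>k. ((\<lambda>i. w i * v i k) has_sum m k) I"
  shows "((\<lambda>i. w i * f (v i)) summable_on I) \<and> infsum (\<lambda>i. w i * f (v i)) I \<le> f m"
proof -
  have sw: "w summable_on I" using wsum summable_on_def by blast
  have summ: "(\<lambda>i. w i * f (v i)) summable_on I"
  proof -
    have sB: "(\<lambda>i. B * w i) summable_on I" using sw by (rule summable_on_cmult_right)
    have le: "\<bar>w i * f (v i)\<bar> \<le> B * w i" if i: "i \<in> I" for i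
    proof -
      have "\<bar>f (v i)\<bar> * w i \<le> B * w i"
        using bound[OF vs[OF i]] wpos[OF i] by (rule mult_right_mono)
      then show ?thesis using wpos[OF i] by (simp add: abs_mult mult.commute)
    qed
    have "(\<lambda>i. norm (w i * f (v i))) summable_on I"
      using summable_on_comparison_test[OF sB, of "\<lambda>i. norm (w i * f (v i))"] le by simp
    then show ?thesis using summable_on_iff_abs_summable_on_real by blast
  qed
  have key: "(\<Sum>i\<in>J. w i * f (v i)) \<le> f m + B * (1 - sum w J)" if J: "finite J" "J \<subseteq> I" for J
  proof -
    define W where "W = sum w J"
    define r where "r = (\<lambda>k. m k - (\<Sum>i\<in>J. w i * v i k))"
    have hr: "((\<lambda>i. w i * v i k) has_sum r k) (I - J)" for k
      unfolding r_def using J by (intro has_sum_Diff m) auto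
    have hw: "(w has_sum (1 - W)) (I - J)"
      unfolding W_def using J by (intro has_sum_Diff wsum) auto
    have W1: "W \<le> 1" using has_sum_nonneg[OF hw] wpos by auto
    have r0: "0 \<le> r k" for k
      using hr by (rule has_sum_nonneg) (use wpos vs in \<open>auto simp: simpl_def\<close>)
    have r1: "r k \<le> 1 - W" for k
    proof (rule has_sum_mono[OF hr hw])
      fix i assume i: "i \<in> I - J"
      have "v i k \<le> 1"
      proof -
        have "v i k \<le> sum (v i) UNIV" using vs[of i] i
          by (intro member_le_sum) (auto simp: simpl_def)
        then show ?thesis using vs[of i] i by (auto simp: simpl_def)
      qed
      then show "w i * v i k \<le> w i" using wpos[of i] i by (simp add: mult_left_le)
    qed
    have rs: "sum r UNIV = 1 - W"
    proof -
      have hs: "((\<lambda>i. \<Sum>k\<in>UNIV. w i * v i k) has_sum (\<Sum>k\<in>UNIV. r k)) (I - J)"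
        by (rule has_sum_fsum) (auto intro: hr)
      have "(w has_sum (\<Sum>k\<in>UNIV. r k)) (I - J)"
      proof (rule has_sum_cong[THEN iffD1, OF _ hs])
        fix i assume "i \<in> I - J"
        then show "(\<Sum>k\<in>UNIV. w i * v i k) = w i"
          using vs[of i] by (simp add: sum_distrib_left[symmetric] simpl_def)
      qed
      then show ?thesis using hw has_sum_unique by blast
    qed
    define t where "t = (if W < 1 then (\<lambda>k. r k / (1 - W)) else m)"
    have tm: "m = (\<lambda>k. (\<Sum>i\<in>J. w i * v i k) + (1 - W) * t k)"
    proof (cases "W < 1")
      case True
      then show ?thesis unfolding t_def r_def by auto
    next
      case False
      then have "W = 1" using W1 by simp
      then have "r k = 0" for k using r0[of k] r1[of k] by simp
      then show ?thesis using \<open>W = 1\<close> unfolding r_def by auto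
    qed
    have st: "simpl t"
    proof (cases "W < 1")
      case True
      then show ?thesis unfolding t_def simpl_def using r0 rs
        by (auto simp: sum_divide_distrib[symmetric])
    next
      case False
      then have "W = 1" using W1 by simp
      then have "r k = 0" for k using r0[of k] r1[of k] by simp
      then have "m k = (\<Sum>i\<in>J. w i * v i k)" for k unfolding r_def by simp
      then have "m = (\<lambda>k. \<Sum>i\<in>J. w i * v i k)" by auto
      moreover have "0 \<le> (\<Sum>i\<in>J. w i * v i k)" for k using J wpos vs
        by (intro sum_nonneg mult_nonneg_nonneg) (auto simp: simpl_def)
      moreover have "(\<Sum>k\<in>UNIV. \<Sum>i\<in>J. w i * v i k) = 1"
      proof -
        have "(\<Sum>k\<in>UNIV. \<Sum>i\<in>J. w i * v i k) = (\<Sum>i\<in>J. w i * sum (v i) UNIV)"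
          by (subst sum.swap) (simp add: sum_distrib_left)
        also have "\<dots> = W" unfolding W_def using J vs by (intro sum.cong) (auto simp: simpl_def)
        finally show ?thesis using \<open>W = 1\<close> by simp
      qed
      ultimately show ?thesis using False unfolding t_def simpl_def by auto
    qed
    have "(\<Sum>i\<in>J. w i * f (v i)) + (1 - W) * f t \<le> f m"
    proof -
      have "\<forall>i\<in>J. 0 \<le> w i \<and> simpl (v i)" using J wpos vs by auto
      from fin_jensen[where f=f and J=J and w=w and v=v and t=t, OF conc J(1) this _ st] W1 have
        "(\<Sum>i\<in>J. w i * f (v i)) + (1 - W) * f t
         \<le> f (\<lambda>k. (\<Sum>i\<in>J. w i * v i k) + (1 - W) * t k)" unfolding W_def by blast
      then show ?thesis using tm by simp
    qed
    moreover have "- ((1 - W) * f t) \<le> (1 - W) * B"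
    proof -
      have "\<bar>(1 - W) * f t\<bar> \<le> (1 - W) * B" using bound[OF st] W1
        by (simp add: abs_mult mult_left_mono)
      then show ?thesis by linarith
    qed
    ultimately show ?thesis unfolding W_def by (simp add: algebra_simps)
  qed
  have "infsum (\<lambda>i. w i * f (v i)) I \<le> f m + B * (1 - 1)"
  proof (rule tendsto_le[OF _ _ _ eventually_finite_subsets_at_top_weakI])
    show "((\<lambda>J. sum (\<lambda>i. w i * f (v i)) J) \<longlongrightarrow> infsum (\<lambda>i. w i * f (v i)) I) (finite_subsets_at_top I)"
      using summ has_sum_def summable_iff_has_sum_infsum by blast
    show "((\<lambda>J. f m + B * (1 - sum w J)) \<longlongrightarrow> f m + B * (1 - 1)) (finite_subsets_at_top I)"
      using wsum unfolding has_sum_def by (intro tendsto_intros)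
  qed (use key in auto)
  then show ?thesis using summ by simp
qed


lemma pmf_summable_on: "pmf P summable_on A"
proof -
  have "Infinite_Sum.abs_summable_on (pmf P) A"
    using abs_summable_equivalent pmf_abs_summable by blast
  then show ?thesis using summable_on_iff_abs_summable_on_real by blast
qed

lemma pmf_has_sum: "(pmf P has_sum measure P A) A"
proof -
  have "measure P A = infsum (pmf P) A"
    using measure_pmf_conv_infsetsum infsetsum_infsum pmf_abs_summable by metis
  then show ?thesis using pmf_summable_on summable_iff_has_sum_infsum by metis
qed

lemma pmf_snd_sum:
  fixes P :: "('x::finite \<times> 'y) pmf"
  shows "pmf (map_pmf snd P) y = (\<Sum>x\<in>UNIV. pmf P (x, y))"
proof -
  have e: "snd -` {y} = (\<lambda>x. (x, y)) ` UNIV" by auto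
  have "pmf (map_pmf snd P) y = measure P ((\<lambda>x. (x, y)) ` UNIV)" by (simp add: pmf_map e)
  also have "\<dots> = sum (pmf P) ((\<lambda>x. (x, y)) ` UNIV)"
    by (rule measure_measure_pmf_finite) simp
  also have "\<dots> = (\<Sum>x\<in>UNIV. pmf P (x, y))"
    by (subst sum.reindex) (auto simp: inj_on_def)
  finally show ?thesis .
qed

lemma pmf_fst_has_sum:
  fixes P :: "('x::finite \<times> 'y) pmf"
  shows "((\<lambda>y. pmf P (x, y)) has_sum pmf (map_pmf fst P) x) {y. 0 < pmf (map_pmf snd P) y}"
proof -
  have e: "fst -` {x} = Pair x ` UNIV" by auto
  have "(pmf P has_sum pmf (map_pmf fst P) x) (Pair x ` UNIV)"
    using pmf_has_sum[of P "fst -` {x}"] by (simp add: pmf_map e)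
  then have "((pmf P \<circ> Pair x) has_sum pmf (map_pmf fst P) x) UNIV"
    by (subst (asm) has_sum_reindex) (auto simp: inj_on_def)
  then have h: "((\<lambda>y. pmf P (x, y)) has_sum pmf (map_pmf fst P) x) UNIV" by (simp add: o_def)
  show ?thesis
  proof (subst has_sum_cong_neutral[where g="\<lambda>y. pmf P (x, y)" and T=UNIV])
    fix y assume "y \<in> UNIV - {y. 0 < pmf (map_pmf snd P) y}"
    then have "pmf (map_pmf snd P) y = 0" using pmf_nonneg[of "map_pmf snd P" y] by auto
    then have "(\<Sum>x\<in>UNIV. pmf P (x, y)) = 0" using pmf_snd_sum[of P y] by simp
    then show "pmf P (x, y) = 0"
      using sum_nonneg_eq_0_iff[of UNIV "\<lambda>x. pmf P (x, y)"] by simp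
  qed (use h in auto)
qed

lemma to_list_facts:
  "distinct (SOME ws. distinct ws \<and> set ws = (UNIV :: 'w::finite set)) \<and>
   set (SOME ws. distinct ws \<and> set ws = (UNIV :: 'w set)) = UNIV"
proof (rule someI_ex)
  obtain xs where "set xs = (UNIV :: 'w set) \<and> distinct xs" using finite_distinct_list[OF finite] by blast
  then show "\<exists>ws. distinct ws \<and> set ws = (UNIV :: 'w set)" by blast
qed

lemma map2_map: "map2 h (map a ws) (map b ws) = map (\<lambda>k. h (a k) (b k)) ws"
  by (induction ws) auto

lemma prob_vec_to_list:
  fixes a :: "'w::finite \<Rightarrow> real"
  shows "simpl a \<Longrightarrow> prob_vec (to_list a)"
  using to_list_facts[where 'w='w]
  unfolding prob_vec_def simpl_def to_list_def
  by (auto simp: sum_list_distinct_conv_sum_set)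

lemma conc_to_list:
  assumes "concave_F F" "simpl a" "simpl b" "0 \<le> t" "t \<le> 1"
  shows "t * F (to_list a) + (1 - t) * F (to_list b) \<le> F (to_list (\<lambda>k. t * a k + (1 - t) * b k))"
proof -
  have "to_list (\<lambda>k. t * a k + (1 - t) * b k) = map2 (\<lambda>x y. t * x + (1 - t) * y) (to_list a) (to_list b)"
    unfolding to_list_def map2_map ..
  then show ?thesis using assms prob_vec_to_list[OF assms(2)] prob_vec_to_list[OF assms(3)]
    unfolding concave_F_def by (simp add: to_list_def)
qed


lemma core:
  fixes G :: "'w::finite \<Rightarrow> 'x::finite \<Rightarrow> real"
    and F :: "real list \<Rightarrow> real" and P :: "('x \<times> 'y) pmf"
  assumes G_pos: "\<And>q. (\<forall>x. 0 \<le> q x) \<Longrightarrow> (\<Sum>x\<in>UNIV. q x) = 1 \<Longrightarrow> norm1 (matvec G q) > 0"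
    and G_nonneg: "\<And>q w. (\<forall>x. 0 \<le> q x) \<Longrightarrow> (\<Sum>x\<in>UNIV. q x) = 1 \<Longrightarrow>
                     matvec G q w / norm1 (matvec G q) \<ge> 0"
    and conc: "concave_F F" and bnd: "\<And>xs. prob_vec xs \<Longrightarrow> \<bar>F xs\<bar> \<le> B"
  shows "(\<Sum>\<^sub>\<infinity>y\<in>{y. 0 < pmf (map_pmf snd P) y}. pmf (map_pmf snd P) y *
      persp F (matvec G (\<lambda>x. pmf P (x, y) / pmf (map_pmf snd P) y)))
     \<le> persp F (matvec G (pmf (map_pmf fst P)))"
proof -
  define Q where "Q = map_pmf snd P"
  define S where "S = {y. 0 < pmf Q y}"
  define p where "p = pmf (map_pmf fst P)"
  define qy where "qy = (\<lambda>y x. pmf P (x, y) / pmf Q y)"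
  define g where "g = (\<lambda>y. matvec G (qy y))"
  define sy where "sy = (\<lambda>y. norm1 (g y))"
  define vy where "vy = (\<lambda>y k. g y k / sy y)"
  define gp where "gp = matvec G p"
  define s where "s = norm1 gp"
  define v where "v = (\<lambda>k. gp k / s)"
  define w where "w = (\<lambda>y. pmf Q y * sy y / s)"
  define f where "f = (\<lambda>a::'w \<Rightarrow> real. F (to_list a))"
  have gnn: "0 \<le> matvec G q k" if "\<forall>x. 0 \<le> q x" "sum q UNIV = 1" for q k
    using G_nonneg[OF that, of k] G_pos[OF that] by (simp add: zero_le_divide_iff)
  have n1: "norm1 (matvec G q) = sum (matvec G q) UNIV" if "\<forall>x. 0 \<le> q x" "sum q UNIV = 1" for q
    unfolding norm1_def using gnn[OF that] by simp
  have simplG: "simpl (\<lambda>k. matvec G q k / norm1 (matvec G q))" if "\<forall>x. 0 \<le> q x" "sum q UNIV = 1" for q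
    unfolding simpl_def using gnn[OF that] G_pos[OF that] n1[OF that]
    by (auto simp: sum_divide_distrib[symmetric])
  have qprob: "(\<forall>x. 0 \<le> qy y x) \<and> sum (qy y) UNIV = 1" if "y \<in> S" for y
  proof -
    have "0 < pmf Q y" using that S_def by simp
    then show ?thesis unfolding qy_def using pmf_snd_sum[of P y]
      by (auto simp: sum_divide_distrib[symmetric] Q_def)
  qed
  have pprob: "(\<forall>x. 0 \<le> p x) \<and> sum p UNIV = 1"
    unfolding p_def by (auto intro: sum_pmf_eq_1)
  have sypos: "0 < sy y" if "y \<in> S" for y
    unfolding sy_def g_def using G_pos qprob[OF that] by blast
  have spos: "0 < s" unfolding s_def gp_def using G_pos pprob by blast
  have svy: "simpl (vy y)" if "y \<in> S" for y
    unfolding vy_def sy_def g_def using simplG qprob[OF that] by blast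
  have sv: "simpl v"
    unfolding v_def s_def gp_def using simplG pprob by blast
  have hcomp: "((\<lambda>y. pmf Q y * g y k) has_sum gp k) S" for k
  proof -
    have h1: "((\<lambda>y. \<Sum>x\<in>UNIV. G k x * pmf P (x, y)) has_sum (\<Sum>x\<in>UNIV. G k x * p x)) S"
      by (rule has_sum_fsum) (auto intro!: has_sum_cmult_right
          simp: p_def S_def Q_def pmf_fst_has_sum)
    have e: "gp k = (\<Sum>x\<in>UNIV. G k x * p x)" unfolding gp_def matvec_def by simp
    show ?thesis unfolding e
    proof (rule has_sum_cong[THEN iffD1, OF _ h1])
      fix y assume "y \<in> S"
      then have "pmf Q y \<noteq> 0" unfolding S_def by simp
      then show "(\<Sum>x\<in>UNIV. G k x * pmf P (x, y)) = pmf Q y * g y k"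
        unfolding g_def matvec_def qy_def by (simp add: sum_distrib_left)
    qed
  qed
  have hv: "((\<lambda>y. w y * vy y k) has_sum v k) S" for k
  proof -
    have h: "((\<lambda>y. (1 / s) * (pmf Q y * g y k)) has_sum ((1 / s) * gp k)) S"
      by (rule has_sum_cmult_right[OF hcomp])
    have e: "v k = 1 / s * gp k" unfolding v_def by simp
    show ?thesis unfolding e
    proof (rule has_sum_cong[THEN iffD1, OF _ h])
      fix y assume "y \<in> S"
      then show "1 / s * (pmf Q y * g y k) = w y * vy y k"
        using sypos[of y] unfolding w_def vy_def by (simp add: field_simps)
    qed
  qed
  have hw: "(w has_sum 1) S"
  proof -
    have h: "((\<lambda>y. \<Sum>k\<in>UNIV. w y * vy y k) has_sum (\<Sum>k\<in>UNIV. v k)) S"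
      by (rule has_sum_fsum) (auto intro: hv)
    have "sum v UNIV = 1" using sv unfolding simpl_def by simp
    then have h': "((\<lambda>y. \<Sum>k\<in>UNIV. w y * vy y k) has_sum 1) S" using h by simp
    show ?thesis
    proof (rule has_sum_cong[THEN iffD1, OF _ h'])
      fix y assume "y \<in> S"
      then show "(\<Sum>k\<in>UNIV. w y * vy y k) = w y"
        using svy[of y] by (simp add: sum_distrib_left[symmetric] simpl_def)
    qed
  qed
  have wpos: "0 \<le> w y" if "y \<in> S" for y
    unfolding w_def using sypos[OF that] spos by simp
  have concf: "t*f a + (1-t)*f b \<le> f (\<lambda>k. t*a k + (1-t)*b k)"
    if "simpl a" "simpl b" "0\<le>t" "t\<le>1" for a b t
    unfolding f_def using conc_to_list[OF conc that] .
  have bndf: "\<bar>f a\<bar> \<le> B" if "simpl a" for a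
    unfolding f_def using bnd prob_vec_to_list[OF that] by blast
  have J: "(\<lambda>y. w y * f (vy y)) summable_on S \<and> infsum (\<lambda>y. w y * f (vy y)) S \<le> f v"
    by (rule inf_jensen[where f=f and B=B and I=S and w=w and v=vy and m=v, OF concf bndf wpos hw svy hv])
  have "(\<Sum>\<^sub>\<infinity>y\<in>S. pmf Q y * persp F (matvec G (qy y))) = (\<Sum>\<^sub>\<infinity>y\<in>S. s * (w y * f (vy y)))"
  proof (rule infsum_cong)
    fix y assume "y \<in> S"
    then show "pmf Q y * persp F (matvec G (qy y)) = s * (w y * f (vy y))"
      using spos unfolding persp_def w_def f_def vy_def sy_def g_def by simp
  qed
  also have "\<dots> = s * (\<Sum>\<^sub>\<infinity>y\<in>S. w y * f (vy y))" by (rule infsum_cmult_right')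
  also have "\<dots> \<le> s * f v" using J spos by (simp add: mult_left_mono)
  also have "\<dots> = persp F (matvec G p)"
    unfolding persp_def f_def v_def s_def gp_def by simp
  finally show ?thesis unfolding Q_def S_def qy_def p_def .
qed

theorem proposition3:
  fixes G :: "'w::finite \<Rightarrow> 'x::finite \<Rightarrow> real"
    and \<eta> :: "real \<Rightarrow> real" and F :: "real list \<Rightarrow> real"
    and P :: "('x \<times> 'y) pmf"
  assumes G_pos: "\<And>q. (\<forall>x. 0 \<le> q x) \<Longrightarrow> (\<Sum>x\<in>UNIV. q x) = 1 \<Longrightarrow> norm1 (matvec G q) > 0"
    and G_nonneg: "\<And>q w. (\<forall>x. 0 \<le> q x) \<Longrightarrow> (\<Sum>x\<in>UNIV. q x) = 1 \<Longrightarrow>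
                     matvec G q w / norm1 (matvec G q) \<ge> 0"
    and ent: "generalised_entropy \<eta> F"
  shows "Hg \<eta> F G P - Hg_cond \<eta> F G P \<ge> 0"
proof -
  obtain B where bnd: "\<And>xs. prob_vec xs \<Longrightarrow> \<bar>F xs\<bar> \<le> B"
    using ent unfolding generalised_entropy_def by blast
  define A where "A = (\<Sum>\<^sub>\<infinity>y\<in>{y. 0 < pmf (map_pmf snd P) y}. pmf (map_pmf snd P) y *
      persp F (matvec G (\<lambda>x. pmf P (x, y) / pmf (map_pmf snd P) y)))"
  define C where "C = persp F (matvec G (pmf (map_pmf fst P)))"
  have HH: "Hg \<eta> F G P = \<eta> C" "Hg_cond \<eta> F G P = \<eta> A"
    unfolding Hg_def Hg_cond_def A_def C_def by simp_all
  consider "mono \<eta>" "concave_F F" | "antimono \<eta>" "convex_F F"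
    using ent unfolding generalised_entropy_def by blast
  then show ?thesis
  proof cases
    case 1
    have "A \<le> C" unfolding A_def C_def
      by (rule core[OF G_pos G_nonneg \<open>concave_F F\<close> bnd]) auto
    then have "\<eta> A \<le> \<eta> C" using \<open>mono \<eta>\<close> by (simp add: monoD)
    then show ?thesis using HH by simp
  next
    case 2
    define F' where "F' = (\<lambda>xs. - F xs)"
    have cF': "concave_F F'" using \<open>convex_F F\<close>
      unfolding concave_F_def convex_F_def F'_def by fastforce
    have bF': "\<bar>F' xs\<bar> \<le> B" if "prob_vec xs" for xs using bnd[OF that] F'_def by simp
    have pF': "persp F' v = - persp F v" for v :: "'w \<Rightarrow> real"
      unfolding persp_def F'_def by simp
    have "(\<Sum>\<^sub>\<infinity>y\<in>{y. 0 < pmf (map_pmf snd P) y}. pmf (map_pmf snd P) y *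
      persp F' (matvec G (\<lambda>x. pmf P (x, y) / pmf (map_pmf snd P) y)))
     \<le> persp F' (matvec G (pmf (map_pmf fst P)))"
      by (rule core[OF G_pos G_nonneg cF' bF']) auto
    then have "- A \<le> - C" unfolding A_def C_def pF' by (simp add: infsum_uminus)
    then have "C \<le> A" by simp
    then have "\<eta> A \<le> \<eta> C" using \<open>antimono \<eta>\<close> by (simp add: antimonoD)
    then show ?thesis using HH by simp
  qed
qed
end
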